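(* Let $\Omega\subset\mathbb{R}^N$ ($N\ge2$) be a bounded Lipschitz domain, $p_1,\dots,p_N:\mathbb{R}\to[2,\infty)$ continuous with $N<p_i^-\le p_i(t)\le p_i^+<\infty$ for all $t$ (where $p_i^\mp$ are the essential inf/sup of $p_i$ over $\mathbb{R}$), $p^-:=\min_ip_i^-$, $p^+:=\max_ip_i^+$, and $f:\Omega\times\mathbb{R}\to\mathbb{R}$ Carathéodory with $f(\cdot,0)<0$ and $|f(x,t)|\le c(1+|t|^{r-1})$ for some $c>0$, $1\le r<p^-$. Fix $\epsilon>0$ and define $I:W^{1,p^+}_0(\Omega)\to(W^{1,p^+}_0(\Omega))^*$ by $$\langle I(u),v\rangle=\sum_{i=1}^N\int_\Omega\Big|\frac{\partial u}{\partial x_i}\Big|^{p_i(u)-2}\frac{\partial u}{\partial x_i}\frac{\partial v}{\partial x_i}dx+\epsilon\int_\Omega|\nabla u|^{p^+-2}\nabla u\cdot\nabla v\,dx-\int_\Omega f(x,u)v\,dx.$$ Then $I$ is coercive and bounded.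
   Context: An operator $J:X\to X^*$ is bounded if it maps bounded sets to bounded sets, and coercive if $\langle J(u),u\rangle/\|u\|\to\infty$ as $\|u\|\to\infty$. *)

theory Defs
  imports "HOL-Analysis.Analysis"
begin

fun iter_pd :: "'a::euclidean_space list \<Rightarrow> ('a \<Rightarrow> real) \<Rightarrow> 'a \<Rightarrow> real" where
  "iter_pd [] f = f"
| "iter_pd (v # vs) f = (\<lambda>x. frechet_derivative (iter_pd vs f) (at x) v)"

definition smooth_fun :: "('a::euclidean_space \<Rightarrow> real) \<Rightarrow> bool" where
  "smooth_fun f \<longleftrightarrow> (\<forall>vs x. iter_pd vs f differentiable (at x))"

definition tsupport :: "('a::euclidean_space \<Rightarrow> real) \<Rightarrow> 'a set" where
  "tsupport f = closure {x. f x \<noteq> 0}"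

definition test_fun :: "'a::euclidean_space set \<Rightarrow> ('a \<Rightarrow> real) \<Rightarrow> bool" where
  "test_fun \<Omega> \<phi> \<longleftrightarrow> smooth_fun \<phi> \<and> compact (tsupport \<phi>) \<and> tsupport \<phi> \<subseteq> \<Omega>"

definition grad :: "('a::euclidean_space \<Rightarrow> real) \<Rightarrow> 'a \<Rightarrow> 'a" where
  "grad \<phi> x = (\<Sum>b\<in>Basis. frechet_derivative \<phi> (at x) b *\<^sub>R b)"

text \<open>Bounded Lipschitz domain: bounded, open, connected, and near every boundary point
  the domain is (after a rigid motion) the region below the graph of a Lipschitz function.\<close>
definition lipschitz_domain :: "'a::euclidean_space set \<Rightarrow> bool" where
  "lipschitz_domain \<Omega> \<longleftrightarrow> open \<Omega> \<and> connected \<Omega> \<and> \<Omega> \<noteq> {} \<and> bounded \<Omega> \<and>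
     (\<forall>x\<in>frontier \<Omega>. \<exists>r>0. \<exists>T c e \<gamma> L. orthogonal_transformation T \<and> e \<in> Basis \<and>
        L-lipschitz_on UNIV (\<gamma> :: 'a \<Rightarrow> real) \<and>
        ball x r \<inter> \<Omega> = ball x r \<inter> (\<lambda>y. c + T y) ` {y. y \<bullet> e < \<gamma> (y - (y \<bullet> e) *\<^sub>R e)})"

definition Lq :: "real \<Rightarrow> 'a::euclidean_space set \<Rightarrow> ('a \<Rightarrow> 'b::euclidean_space) \<Rightarrow> bool" where
  "Lq q \<Omega> u \<longleftrightarrow> u \<in> borel_measurable (lebesgue_on \<Omega>) \<and>
     integrable (lebesgue_on \<Omega>) (\<lambda>x. norm (u x) powr q)"

definition Lq_norm :: "real \<Rightarrow> 'a::euclidean_space set \<Rightarrow> ('a \<Rightarrow> 'b::euclidean_space) \<Rightarrow> real" where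
  "Lq_norm q \<Omega> u = (integral\<^sup>L (lebesgue_on \<Omega>) (\<lambda>x. norm (u x) powr q)) powr (1 / q)"

text \<open>W_0^{1,q}(Omega) as the closure of C_c^infinity(Omega) in the W^{1,q} norm.
  An element is represented by a pair (u, g) of the function and its (weak) gradient.\<close>
definition W0 :: "real \<Rightarrow> 'a::euclidean_space set \<Rightarrow> (('a \<Rightarrow> real) \<times> ('a \<Rightarrow> 'a)) set" where
  "W0 q \<Omega> = {(u, g). Lq q \<Omega> u \<and> Lq q \<Omega> g \<and>
      (\<exists>\<phi>. (\<forall>k. test_fun \<Omega> (\<phi> k)) \<and>
         (\<lambda>k. Lq_norm q \<Omega> (\<lambda>x. u x - \<phi> k x)) \<longlonglongrightarrow> 0 \<and>
         (\<lambda>k. Lq_norm q \<Omega> (\<lambda>x. g x - grad (\<phi> k) x)) \<longlonglongrightarrow> 0)}"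

definition W_norm :: "real \<Rightarrow> 'a::euclidean_space set \<Rightarrow> ('a \<Rightarrow> real) \<times> ('a \<Rightarrow> 'a) \<Rightarrow> real" where
  "W_norm q \<Omega> ug = Lq_norm q \<Omega> (fst ug) + Lq_norm q \<Omega> (snd ug)"

definition caratheodory :: "'a::euclidean_space set \<Rightarrow> ('a \<Rightarrow> real \<Rightarrow> real) \<Rightarrow> bool" where
  "caratheodory \<Omega> f \<longleftrightarrow> (\<forall>t. (\<lambda>x. f x t) \<in> borel_measurable (lebesgue_on \<Omega>)) \<and>
     (AE x in lebesgue_on \<Omega>. continuous_on UNIV (f x))"

definition pminus :: "(real \<Rightarrow> real) \<Rightarrow> real" where "pminus q = Inf (range q)"
definition pplus :: "(real \<Rightarrow> real) \<Rightarrow> real" where "pplus q = Sup (range q)"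

definition opI :: "'a::euclidean_space set \<Rightarrow> ('a \<Rightarrow> real \<Rightarrow> real) \<Rightarrow> real \<Rightarrow> real \<Rightarrow>
    ('a \<Rightarrow> real \<Rightarrow> real) \<Rightarrow> ('a \<Rightarrow> real) \<times> ('a \<Rightarrow> 'a) \<Rightarrow> ('a \<Rightarrow> real) \<times> ('a \<Rightarrow> 'a) \<Rightarrow> real" where
  "opI \<Omega> p q \<epsilon> f ug vh =
     (let u = fst ug; g = snd ug; v = fst vh; h = snd vh in
       (\<Sum>i\<in>Basis. integral\<^sup>L (lebesgue_on \<Omega>)
          (\<lambda>x. \<bar>g x \<bullet> i\<bar> powr (p i (u x) - 2) * (g x \<bullet> i) * (h x \<bullet> i)))
       + \<epsilon> * integral\<^sup>L (lebesgue_on \<Omega>) (\<lambda>x. norm (g x) powr (q - 2) * (g x \<bullet> h x))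
       - integral\<^sup>L (lebesgue_on \<Omega>) (\<lambda>x. f x (u x) * v x))"

end

theory Submission
  imports Defs
begin

lemma pw_young:
  fixes w y s q :: real
  assumes "w \<ge> 0" "y \<ge> 0" "s > 0" "q > 1"
  shows "w powr (q-1) * y \<le> s * w powr q + y powr q / s powr (q-1)"
proof (cases "y \<le> s * w")
  case True
  have "w powr (q-1) * y \<le> w powr (q-1) * (s*w)"
    using True assms by (intro mult_left_mono) auto
  also have "\<dots> = s * w powr q"
    using assms by (cases "w = 0") (auto simp: powr_diff powr_one)
  finally show ?thesis using assms by (smt (verit) divide_nonneg_nonneg powr_ge_zero)
next
  case False
  hence "w \<le> y / s" using assms by (simp add: field_simps)
  hence "w powr (q-1) \<le> (y/s) powr (q-1)" using assms by (intro powr_mono2) auto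
  hence "w powr (q-1) * y \<le> (y/s) powr (q-1) * y" using assms by (intro mult_right_mono) auto
  also have "\<dots> = y powr q / s powr (q-1)"
    using assms False by (cases "y = 0") (auto simp: powr_divide powr_diff powr_one)
  finally show ?thesis using assms by (smt (verit) mult_nonneg_nonneg powr_ge_zero)
qed

lemma pw_young1:
  fixes y s q :: real
  assumes "y \<ge> 0" "s > 0" "q > 1"
  shows "y \<le> s + y powr q / s powr (q-1)"
  using pw_young[of 1 y s q] assms by simp

lemma pw_sub:
  fixes a q \<delta> :: real
  assumes "0 \<le> a" "a < q" "\<delta> > 0"
  shows "\<exists>C\<ge>0. \<forall>t\<ge>0. t powr a \<le> \<delta> * t powr q + C"
proof -
  define T where "T = \<delta> powr (-1/(q-a))"
  have T: "T > 0" using assms by (simp add: T_def)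
  have "T powr (q-a) = \<delta> powr (-1)" using assms
    by (simp add: T_def powr_powr)
  also have "\<dots> = 1/\<delta>" using assms by (simp add: powr_minus divide_inverse)
  finally have "T powr (q-a) = 1/\<delta>" .
  show ?thesis
  proof (intro exI[of _ "T powr a"] conjI allI impI)
    fix t :: real assume t: "t \<ge> 0"
    show "t powr a \<le> \<delta> * t powr q + T powr a"
    proof (cases "t \<le> T")
      case True
      hence "t powr a \<le> T powr a" using t assms by (intro powr_mono2) auto
      then show ?thesis using assms by (smt (verit) mult_nonneg_nonneg powr_ge_zero)
    next
      case False
      hence "T powr (q-a) \<le> t powr (q-a)" using T assms by (intro powr_mono2) auto
      hence "1 \<le> \<delta> * t powr (q-a)" using \<open>T powr (q-a) = 1/\<delta>\<close> assms by (simp add: field_simps)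
      hence "t powr a \<le> \<delta> * t powr (q-a) * t powr a" by (simp add: mult_le_cancel_right1)
      also have "\<dots> = \<delta> * t powr q" using T False by (simp add: powr_add[symmetric])
      finally show ?thesis by (smt (verit) powr_ge_zero)
    qed
  qed simp
qed

lemma pw_exp:
  fixes t a b :: real
  assumes "t \<ge> 0" "0 \<le> a" "a \<le> b"
  shows "t powr a \<le> 1 + t powr b"
proof (cases "t \<le> 1")
  case True
  hence "t powr a \<le> 1" using assms by (cases "t = 0") (auto intro: powr_le1)
  then show ?thesis by (smt (verit) powr_ge_zero)
next
  case False
  hence "t powr a \<le> t powr b" using assms by (intro powr_mono) auto
  then show ?thesis by simp
qed

lemma pw_sum:
  fixes a b q :: real
  assumes "q \<ge> 0"
  shows "\<bar>a + b\<bar> powr q \<le> 2 powr q * (\<bar>a\<bar> powr q + \<bar>b\<bar> powr q)"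
proof -
  have "\<bar>a+b\<bar> \<le> 2 * max \<bar>a\<bar> \<bar>b\<bar>" by auto
  hence "\<bar>a+b\<bar> powr q \<le> (2 * max \<bar>a\<bar> \<bar>b\<bar>) powr q" using assms by (intro powr_mono2) auto
  also have "\<dots> = 2 powr q * max \<bar>a\<bar> \<bar>b\<bar> powr q" by (simp add: powr_mult)
  also have "max \<bar>a\<bar> \<bar>b\<bar> powr q \<le> \<bar>a\<bar> powr q + \<bar>b\<bar> powr q"
    by (cases "\<bar>a\<bar> \<le> \<bar>b\<bar>") (auto simp: max_def)
  finally show ?thesis by (simp add: mult_left_mono)
qed

lemma bound_term:
  fixes M :: "'b measure" and F w y :: "'b \<Rightarrow> real"
  assumes fm: "finite_measure M" and q: "q > 1"
    and wi: "integrable M (\<lambda>x. w x powr q)" and w0: "\<And>x. w x \<ge> 0"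
    and yi: "integrable M (\<lambda>x. y x powr q)" and y0: "\<And>x. y x \<ge> 0"
    and Bq: "integral\<^sup>L M (\<lambda>x. w x powr q) \<le> Bq"
    and Y: "integral\<^sup>L M (\<lambda>x. y x powr q) \<le> s powr q" and s: "s > 0" and k: "k \<ge> 0"
    and F: "AE x in M. \<bar>F x\<bar> \<le> k * ((1 + w x powr (q-1)) * y x)"
  shows "\<bar>integral\<^sup>L M F\<bar> \<le> k * s * (measure M (space M) + Bq + 2)"
proof (cases "integrable M F")
  case True
  define \<Phi> where "\<Phi> x = k * (s + s * w x powr q + 2 * (y x powr q / s powr (q-1)))" for x
  have pw: "\<bar>F x\<bar> \<le> \<Phi> x" if "\<bar>F x\<bar> \<le> k * ((1 + w x powr (q-1)) * y x)" for x
  proof -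
    have "(1 + w x powr (q-1)) * y x = y x + w x powr (q-1) * y x" by (simp add: algebra_simps)
    also have "\<dots> \<le> (s + y x powr q / s powr (q-1)) + (s * w x powr q + y x powr q / s powr (q-1))"
      using pw_young[OF w0 y0 s q] pw_young1[OF y0 s q] by (intro add_mono)
    finally have "(1 + w x powr (q-1)) * y x \<le> s + s * w x powr q + 2 * (y x powr q / s powr (q-1))"
      by simp
    then show ?thesis using that k unfolding \<Phi>_def by (smt (verit) mult_left_mono)
  qed
  have fin: "finite_measure M" by fact
  have int\<Phi>: "integrable M \<Phi>"
    unfolding \<Phi>_def using wi yi finite_measure.integrable_const[OF fin]
    by (intro Bochner_Integration.integrable_add Bochner_Integration.integrable_mult_right
        Bochner_Integration.integrable_divide wi yi finite_measure.integrable_const[OF fin])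
  have "\<bar>integral\<^sup>L M F\<bar> \<le> integral\<^sup>L M \<Phi>"
  proof -
    have "\<bar>integral\<^sup>L M F\<bar> \<le> integral\<^sup>L M (\<lambda>x. \<bar>F x\<bar>)" by (rule integral_abs_bound)
    also have "\<dots> \<le> integral\<^sup>L M \<Phi>"
      using F True int\<Phi> by (intro integral_mono_AE) (auto elim!: eventually_mono intro: pw)
    finally show ?thesis .
  qed
  also have "integral\<^sup>L M \<Phi> = k * (s * measure M (space M) + s * integral\<^sup>L M (\<lambda>x. w x powr q)
      + 2 * (integral\<^sup>L M (\<lambda>x. y x powr q) / s powr (q-1)))"
  proof -
    have i1: "integrable M (\<lambda>x. s * w x powr q)" using wi by simp
    have i2: "integrable M (\<lambda>x. 2 * (y x powr q / s powr (q-1)))" using yi by simp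
    have ic: "integrable M (\<lambda>x. s)" using finite_measure.integrable_const[OF fin] .
    have "integral\<^sup>L M \<Phi> = k * integral\<^sup>L M (\<lambda>x. s + s * w x powr q + 2 * (y x powr q / s powr (q-1)))"
      unfolding \<Phi>_def by simp
    also have "integral\<^sup>L M (\<lambda>x. s + s * w x powr q + 2 * (y x powr q / s powr (q-1)))
       = integral\<^sup>L M (\<lambda>x. s) + integral\<^sup>L M (\<lambda>x. s * w x powr q) + integral\<^sup>L M (\<lambda>x. 2 * (y x powr q / s powr (q-1)))"
      using i1 i2 ic by (simp add: Bochner_Integration.integral_add)
    finally show ?thesis by (simp add: mult.commute)
  qed
  also have "\<dots> \<le> k * (s * measure M (space M) + s * Bq + 2 * (s powr q / s powr (q-1)))"
    using Bq Y s k by (intro mult_left_mono add_mono divide_right_mono) auto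
  also have "s powr q / s powr (q-1) = s" using s by (simp add: powr_diff)
  finally show ?thesis by (simp add: algebra_simps)
next
  case False
  have "0 \<le> integral\<^sup>L M (\<lambda>x. w x powr q)" by (rule integral_nonneg_AE) auto
  hence "0 \<le> Bq" using Bq by linarith
  hence "0 \<le> k * s * (measure M (space M) + Bq + 2)" using k s by (simp add: measure_nonneg)
  then show ?thesis using False by (simp add: not_integrable_integral_eq)
qed

lemma lower_term:
  fixes M :: "'b measure" and F w :: "'b \<Rightarrow> real"
  assumes fm: "finite_measure M" and r: "r \<ge> 1"
    and wi: "integrable M (\<lambda>x. w x powr q)" and w0: "\<And>x. w x \<ge> 0"
    and c: "c \<ge> 0" and d: "\<delta> \<ge> 0" and C1: "C1 \<ge> 0" and C2: "C2 \<ge> 0"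
    and C1b: "\<forall>t\<ge>0. t powr 1 \<le> \<delta> * t powr q + C1"
    and C2b: "\<forall>t\<ge>0. t powr r \<le> \<delta> * t powr q + C2"
    and F: "AE x in M. \<bar>F x\<bar> \<le> c * ((1 + w x powr (r-1)) * w x)"
  shows "\<bar>integral\<^sup>L M F\<bar> \<le> c * (2 * \<delta> * integral\<^sup>L M (\<lambda>x. w x powr q) + (C1 + C2) * measure M (space M))"
proof (cases "integrable M F")
  case True
  define \<Phi> where "\<Phi> x = c * (2 * \<delta> * w x powr q + (C1 + C2))" for x
  have pw: "\<bar>F x\<bar> \<le> \<Phi> x" if "\<bar>F x\<bar> \<le> c * ((1 + w x powr (r-1)) * w x)" for x
  proof -
    have e: "w x powr (r-1) * w x = w x powr r"
      using w0[of x] r by (cases "w x = 0") (auto simp: powr_diff)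
    have "(1 + w x powr (r-1)) * w x = w x powr 1 + w x powr r"
      using w0[of x] e by (simp add: algebra_simps)
    also have "\<dots> \<le> (\<delta> * w x powr q + C1) + (\<delta> * w x powr q + C2)"
      using C1b C2b w0[of x] by (intro add_mono) auto
    finally have "(1 + w x powr (r-1)) * w x \<le> 2 * \<delta> * w x powr q + (C1 + C2)" by simp
    then show ?thesis using that c unfolding \<Phi>_def by (smt (verit) mult_left_mono)
  qed
  have fin: "finite_measure M" by fact
  have i1: "integrable M (\<lambda>x. 2 * \<delta> * w x powr q)" using wi by simp
  have ic: "integrable M (\<lambda>x. C1 + C2)" using finite_measure.integrable_const[OF fin] .
  have int\<Phi>: "integrable M \<Phi>"
    unfolding \<Phi>_def using i1 ic by simp
  have "\<bar>integral\<^sup>L M F\<bar> \<le> integral\<^sup>L M \<Phi>"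
  proof -
    have "\<bar>integral\<^sup>L M F\<bar> \<le> integral\<^sup>L M (\<lambda>x. \<bar>F x\<bar>)" by (rule integral_abs_bound)
    also have "\<dots> \<le> integral\<^sup>L M \<Phi>"
      using F True int\<Phi> by (intro integral_mono_AE) (auto elim!: eventually_mono intro: pw)
    finally show ?thesis .
  qed
  also have "integral\<^sup>L M \<Phi> = c * (integral\<^sup>L M (\<lambda>x. 2 * \<delta> * w x powr q) + integral\<^sup>L M (\<lambda>x. C1 + C2))"
    unfolding \<Phi>_def using i1 ic by (simp add: Bochner_Integration.integral_add)
  finally show ?thesis by (simp add: ac_simps)
next
  case False
  have "0 \<le> integral\<^sup>L M (\<lambda>x. w x powr q)" by (rule integral_nonneg_AE) auto
  hence "0 \<le> c * (2 * \<delta> * integral\<^sup>L M (\<lambda>x. w x powr q) + (C1 + C2) * measure M (space M))"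
    using c d C1 C2 by (simp add: measure_nonneg)
  then show ?thesis using False by (simp add: not_integrable_integral_eq)
qed

lemma borel_lebesgue_on:
  "f \<in> borel_measurable borel \<Longrightarrow> f \<in> borel_measurable (lebesgue_on S)"
  by (intro measurable_restrict_space1 measurable_completion) simp

lemma test_diff:
  assumes "test_fun \<Omega> \<phi>"
  shows "\<phi> differentiable (at x)"
proof -
  have "iter_pd [] \<phi> differentiable (at x)"
    using assms unfolding test_fun_def smooth_fun_def by blast
  then show ?thesis by simp
qed

lemma test_cont:
  assumes "test_fun \<Omega> \<phi>"
  shows "continuous_on UNIV \<phi>"
  using test_diff[OF assms]
  by (intro differentiable_imp_continuous_on differentiable_at_imp_differentiable_on) auto

lemma test_dcont:
  assumes "test_fun \<Omega> \<phi>"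
  shows "continuous_on UNIV (\<lambda>x. frechet_derivative \<phi> (at x) v)"
proof -
  have "(\<lambda>x. frechet_derivative \<phi> (at x) v) differentiable (at x)" for x
  proof -
    have "iter_pd [v] \<phi> differentiable (at x)"
      using assms unfolding test_fun_def smooth_fun_def by blast
    then show ?thesis by simp
  qed
  then show ?thesis
    by (intro differentiable_imp_continuous_on differentiable_at_imp_differentiable_on) auto
qed

lemma test_zero:
  assumes "test_fun \<Omega> \<phi>" "x \<notin> \<Omega>"
  shows "\<phi> x = 0"
proof -
  have "x \<notin> tsupport \<phi>" using assms unfolding test_fun_def by auto
  then show ?thesis using closure_subset[of "{x. \<phi> x \<noteq> 0}"] unfolding tsupport_def by auto
qed

lemma test_dzero:
  assumes "test_fun \<Omega> \<phi>" "x \<notin> \<Omega>"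
  shows "frechet_derivative \<phi> (at x) = (\<lambda>_. 0)"
proof -
  let ?S = "- tsupport \<phi>"
  have S: "open ?S" "x \<in> ?S" using assms unfolding test_fun_def tsupport_def by auto
  have z: "\<forall>y\<in>?S. \<phi> y = 0" using closure_subset[of "{x. \<phi> x \<noteq> 0}"] unfolding tsupport_def by auto
  have "((\<lambda>_. 0::real) has_derivative (\<lambda>_. 0)) (at x)" by simp
  hence "(\<phi> has_derivative (\<lambda>_. 0)) (at x)"
    by (rule has_derivative_transform_within_open[where s="?S"]) (use S z in auto)
  then show ?thesis by (rule frechet_derivative_at[symmetric])
qed

lemma grad_inner:
  assumes "e \<in> Basis"
  shows "grad \<phi> x \<bullet> e = frechet_derivative \<phi> (at x) e"
  unfolding grad_def using assms
  by (simp add: inner_sum_left inner_Basis if_distrib cong: if_cong)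

lemma test_grad_cont:
  assumes "test_fun \<Omega> \<phi>"
  shows "continuous_on UNIV (grad \<phi>)"
  unfolding grad_def[abs_def]
  by (intro continuous_intros test_dcont[OF assms])

lemma J_ineq:
  fixes h :: "real \<Rightarrow> real"
  assumes q: "q > 1" and L: "L \<ge> 0" and h0: "\<And>t. h t \<ge> 0"
    and hz: "\<And>t. t \<notin> {0..L} \<Longrightarrow> h t = 0"
    and hi: "integrable lborel h" and hqi: "integrable lborel (\<lambda>t. h t powr q)"
  shows "(integral\<^sup>L lborel h) powr q \<le> (L+1) powr q * integral\<^sup>L lborel (\<lambda>t. h t powr q)"
proof -
  define I where "I = integral\<^sup>L lborel h"
  define H where "H = integral\<^sup>L lborel (\<lambda>t. h t powr q)"
  have I0: "I \<ge> 0" unfolding I_def by (rule integral_nonneg_AE) (auto simp: h0)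
  have H0: "H \<ge> 0" unfolding H_def by (rule integral_nonneg_AE) auto
  have ind: "integrable lborel (indicat_real {0..L})"
    by (rule integrable_real_indicator) (use L in \<open>auto simp: emeasure_lborel_Icc\<close>)
  have mL: "integral\<^sup>L lborel (indicat_real {0..L}) = L" using L by (simp add: integral_indicator)
  have key: "I \<le> s * L + H / s powr (q-1)" if s: "s > 0" for s
  proof -
    have pw: "h t \<le> s * indicat_real {0..L} t + h t powr q / s powr (q-1)" for t
    proof (cases "t \<in> {0..L}")
      case True then show ?thesis using pw_young1[OF h0 s q] by simp
    next
      case False then show ?thesis using hz[OF False] by simp
    qed
    have i2: "integrable lborel (\<lambda>t. s * indicat_real {0..L} t + h t powr q / s powr (q-1))"
      using ind hqi by simp
    have "I \<le> integral\<^sup>L lborel (\<lambda>t. s * indicat_real {0..L} t + h t powr q / s powr (q-1))"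
      unfolding I_def using hi i2 pw by (intro integral_mono) auto
    also have "\<dots> = s * L + H / s powr (q-1)"
      using ind hqi mL unfolding H_def by (simp add: Bochner_Integration.integral_add)
    finally show ?thesis .
  qed
  show ?thesis
  proof (cases "H > 0")
    case True
    define s where "s = H powr (1/q)"
    have s: "s > 0" using True by (simp add: s_def)
    have sq: "s powr q = H" using True q by (simp add: s_def powr_powr)
    have "H / s powr (q-1) = s" using s sq True by (simp add: powr_diff)
    hence "I \<le> s * (L + 1)" using key[OF s] by (simp add: algebra_simps)
    hence "I powr q \<le> (s * (L+1)) powr q" using I0 q by (intro powr_mono2) auto
    also have "\<dots> = (L+1) powr q * H" using s L sq by (simp add: powr_mult)
    finally show ?thesis unfolding I_def H_def .
  next
    case False
    hence H: "H = 0" using H0 by simp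
    have "I = 0"
    proof (rule ccontr)
      assume "I \<noteq> 0"
      hence Ip: "I > 0" using I0 by simp
      have "I \<le> I / (L+1) * L + H / (I/(L+1)) powr (q-1)"
        using key[of "I/(L+1)"] Ip L by simp
      hence "I \<le> I / (L+1) * L" using H by simp
      hence "I * (L+1) \<le> I * L" using L by (simp add: field_simps)
      then show False using Ip by (simp add: algebra_simps)
    qed
    then show ?thesis using H0 q L unfolding I_def H_def by simp
  qed
qed

lemma cont_isCont_UNIV: "continuous_on UNIV f \<Longrightarrow> isCont f x"
  by (simp add: continuous_on_eq_continuous_at)

lemma nn_translate:
  fixes F :: "'a::euclidean_space \<Rightarrow> ennreal" and c :: 'a
  assumes "F \<in> borel_measurable borel"
  shows "(\<integral>\<^sup>+x. F (x + c) \<partial>lborel) = (\<integral>\<^sup>+x. F x \<partial>lborel)"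
proof -
  have "(\<integral>\<^sup>+x. F x \<partial>lborel) = (\<integral>\<^sup>+x. F x \<partial>distr lborel borel ((+) c))"
    by (simp add: lborel_distr_plus)
  also have "\<dots> = (\<integral>\<^sup>+x. F (c + x) \<partial>lborel)"
    using assms by (intro nn_integral_distr) auto
  finally show ?thesis by (simp add: add.commute)
qed

lemma poincare_test_nn:
  fixes \<Omega> :: "'a::euclidean_space set"
  assumes bdd: "bounded \<Omega>" and q: "q > 1"
  shows "\<exists>KP\<ge>0. \<forall>\<phi>. test_fun \<Omega> \<phi> \<longrightarrow>
     (\<integral>\<^sup>+x. ennreal (\<bar>\<phi> x\<bar> powr q) \<partial>lborel)
       \<le> ennreal KP * (\<integral>\<^sup>+x. ennreal (indicator \<Omega> x * norm (grad \<phi> x) powr q) \<partial>lborel)"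
proof -
  obtain D where D: "D > 0" "\<Omega> \<subseteq> ball 0 D" using bounded_subset_ballD[OF bdd] by blast
  define e :: 'a where "e = (SOME e. e \<in> Basis)"
  have e: "e \<in> Basis" unfolding e_def by (rule someI_ex) (use nonempty_Basis in blast)
  have ne: "norm e = 1" using e by simp
  define L where "L = 2 * D"
  have L: "L > 0" using D by (simp add: L_def)
  have out: "x + L *\<^sub>R e \<notin> \<Omega>" if "x \<in> \<Omega>" for x
  proof
    assume "x + L *\<^sub>R e \<in> \<Omega>"
    hence "norm (x + L *\<^sub>R e) < D" using D by auto
    moreover have "norm x < D" using that D by auto
    moreover have "norm (L *\<^sub>R e) - norm x \<le> norm (x + L *\<^sub>R e)"
      using norm_triangle_ineq2[of "L *\<^sub>R e" "-x"] by (simp add: algebra_simps norm_minus_commute)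
    moreover have "norm (L *\<^sub>R e) = L" using ne L by simp
    ultimately show False unfolding L_def by linarith
  qed
  define KP where "KP = (L+1) powr q * L"
  have KP: "KP \<ge> 0" using L by (simp add: KP_def)
  show ?thesis
  proof (intro exI[of _ KP] conjI allI impI KP)
    fix \<phi> assume tf: "test_fun \<Omega> \<phi>"
    define d where "d y = frechet_derivative \<phi> (at y) e" for y
    have dc: "continuous_on UNIV d" unfolding d_def[abs_def] by (rule test_dcont[OF tf])
    define dq where "dq y = \<bar>d y\<bar> powr q" for y
    have dqc: "continuous_on UNIV dq" unfolding dq_def[abs_def] using q
      by (intro continuous_on_powr' continuous_intros dc) auto
    have dm[measurable]: "d \<in> borel_measurable borel" by (rule borel_measurable_continuous_onI[OF dc])
    have dqm[measurable]: "dq \<in> borel_measurable borel" by (rule borel_measurable_continuous_onI[OF dqc])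
    have A: "ennreal (\<bar>\<phi> x\<bar> powr q) \<le> ennreal ((L+1) powr q) *
        (\<integral>\<^sup>+t. ennreal (dq (x + t *\<^sub>R e) * indicator {0..L} t) \<partial>lborel)" for x
    proof (cases "x \<in> \<Omega>")
      case False
      then show ?thesis using test_zero[OF tf False] q by simp
    next
      case True
      define h where "h t = \<bar>d (x + t *\<^sub>R e)\<bar> * indicator {0..L} t" for t
      have cx: "isCont (\<lambda>t. x + t *\<^sub>R e) t" for t by (intro continuous_intros)
      have hc: "isCont (\<lambda>t. \<bar>d (x + t *\<^sub>R e)\<bar>) t" for t
        by (intro continuous_intros isCont_o2[OF cx cont_isCont_UNIV[OF dc]])
      have hqc: "isCont (\<lambda>t. dq (x + t *\<^sub>R e)) t" for t
        by (rule isCont_o2[OF cx cont_isCont_UNIV[OF dqc]])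
      have hi: "integrable lborel h" unfolding h_def[abs_def]
        by (rule borel_integrable_atLeastAtMost) (use hc in auto)
      have hpq: "h t powr q = dq (x + t *\<^sub>R e) * indicator {0..L} t" for t
        unfolding h_def dq_def using q by (auto simp: indicator_def)
      have hqi: "integrable lborel (\<lambda>t. h t powr q)" unfolding hpq
        by (rule borel_integrable_atLeastAtMost) (use hqc in auto)
      have der: "((\<lambda>t. \<phi> (x + t *\<^sub>R e)) has_vector_derivative d (x + t *\<^sub>R e)) (at t within {0..L})" for t
      proof -
        let ?y = "x + t *\<^sub>R e"
        have D1: "((\<lambda>t. x + t *\<^sub>R e) has_derivative (\<lambda>h. h *\<^sub>R e)) (at t within {0..L})"
          by (auto intro!: derivative_eq_intros)
        have D2: "(\<phi> has_derivative frechet_derivative \<phi> (at ?y)) (at ?y)"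
          using test_diff[OF tf] frechet_derivative_works by blast
        have lin: "linear (frechet_derivative \<phi> (at ?y))" by (rule has_derivative_linear[OF D2])
        have "((\<lambda>t. \<phi> (x + t *\<^sub>R e)) has_derivative (\<lambda>h. frechet_derivative \<phi> (at ?y) (h *\<^sub>R e))) (at t within {0..L})"
          by (rule has_derivative_compose[OF D1 D2])
        then show ?thesis unfolding has_vector_derivative_def d_def
          by (simp add: linear_cmul[OF lin])
      qed
      have dcont: "continuous_on {0..L} (\<lambda>t. d (x + t *\<^sub>R e))"
        by (intro continuous_on_compose2[OF dc] continuous_intros) auto
      have "integral\<^sup>L lborel (\<lambda>t. indicator {0..L} t *\<^sub>R d (x + t *\<^sub>R e)) = \<phi> (x + L *\<^sub>R e) - \<phi> (x + 0 *\<^sub>R e)"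
        using L der dcont by (intro integral_FTC_atLeastAtMost) auto
      also have "\<dots> = - \<phi> x" using test_zero[OF tf out[OF True]] by simp
      finally have ftc: "integral\<^sup>L lborel (\<lambda>t. indicator {0..L} t *\<^sub>R d (x + t *\<^sub>R e)) = - \<phi> x" .
      have "\<bar>\<phi> x\<bar> \<le> integral\<^sup>L lborel (\<lambda>t. \<bar>indicator {0..L} t *\<^sub>R d (x + t *\<^sub>R e)\<bar>)"
        using integral_abs_bound[of lborel "\<lambda>t. indicator {0..L} t *\<^sub>R d (x + t *\<^sub>R e)"]
        unfolding ftc by simp
      also have "(\<lambda>t. \<bar>indicator {0..L} t *\<^sub>R d (x + t *\<^sub>R e)\<bar>) = h"
        by (auto simp: h_def indicator_def)
      finally have le1: "\<bar>\<phi> x\<bar> \<le> integral\<^sup>L lborel h" .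
      have "\<bar>\<phi> x\<bar> powr q \<le> (integral\<^sup>L lborel h) powr q" using le1 q by (intro powr_mono2) auto
      also have "\<dots> \<le> (L+1) powr q * integral\<^sup>L lborel (\<lambda>t. h t powr q)"
        using q L hi hqi by (intro J_ineq) (auto simp: h_def)
      finally have le2: "\<bar>\<phi> x\<bar> powr q \<le> (L+1) powr q * integral\<^sup>L lborel (\<lambda>t. h t powr q)" .
      have "ennreal (\<bar>\<phi> x\<bar> powr q) \<le> ennreal ((L+1) powr q * integral\<^sup>L lborel (\<lambda>t. h t powr q))"
        using le2 by (rule ennreal_leI)
      also have "\<dots> = ennreal ((L+1) powr q) * ennreal (integral\<^sup>L lborel (\<lambda>t. h t powr q))"
        by (rule ennreal_mult) auto
      also have "ennreal (integral\<^sup>L lborel (\<lambda>t. h t powr q)) = (\<integral>\<^sup>+t. ennreal (h t powr q) \<partial>lborel)"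
        by (rule nn_integral_eq_integral[symmetric]) (use hqi in auto)
      finally show ?thesis unfolding hpq .
    qed
    have meas2: "(\<lambda>(x, t). ennreal (dq (x + t *\<^sub>R e) * indicator {0..L} t)) \<in> borel_measurable (lborel \<Otimes>\<^sub>M lborel)"
      by measurable
    have B: "(\<integral>\<^sup>+x. (\<integral>\<^sup>+t. ennreal (dq (x + t *\<^sub>R e) * indicator {0..L} t) \<partial>lborel) \<partial>lborel)
        = ennreal L * (\<integral>\<^sup>+x. ennreal (dq x) \<partial>lborel)"
    proof -
      have "(\<integral>\<^sup>+x. (\<integral>\<^sup>+t. ennreal (dq (x + t *\<^sub>R e) * indicator {0..L} t) \<partial>lborel) \<partial>lborel)
         = (\<integral>\<^sup>+t. (\<integral>\<^sup>+x. ennreal (dq (x + t *\<^sub>R e) * indicator {0..L} t) \<partial>lborel) \<partial>lborel)"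
        using lborel_pair.Fubini'[OF meas2] by simp
      also have "\<dots> = (\<integral>\<^sup>+t. (\<integral>\<^sup>+x. ennreal (dq x) \<partial>lborel) * indicator {0..L} t \<partial>lborel)"
      proof (intro nn_integral_cong)
        fix t :: real
        have "(\<integral>\<^sup>+x. ennreal (dq (x + t *\<^sub>R e) * indicator {0..L} t) \<partial>lborel)
            = (\<integral>\<^sup>+x. ennreal (dq (x + t *\<^sub>R e)) * indicator {0..L} t \<partial>lborel)"
          by (intro nn_integral_cong) (auto simp: indicator_def)
        also have "\<dots> = (\<integral>\<^sup>+x. ennreal (dq (x + t *\<^sub>R e)) \<partial>lborel) * indicator {0..L} t"
          by (rule nn_integral_multc) measurable
        also have "(\<integral>\<^sup>+x. ennreal (dq (x + t *\<^sub>R e)) \<partial>lborel) = (\<integral>\<^sup>+x. ennreal (dq x) \<partial>lborel)"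
          by (rule nn_translate[of "\<lambda>x. ennreal (dq x)"]) measurable
        finally show "(\<integral>\<^sup>+x. ennreal (dq (x + t *\<^sub>R e) * indicator {0..L} t) \<partial>lborel)
            = (\<integral>\<^sup>+x. ennreal (dq x) \<partial>lborel) * indicator {0..L} t" .
      qed
      also have "\<dots> = (\<integral>\<^sup>+x. ennreal (dq x) \<partial>lborel) * emeasure lborel {0..L}"
        by (simp add: nn_integral_cmult_indicator)
      also have "\<dots> = ennreal L * (\<integral>\<^sup>+x. ennreal (dq x) \<partial>lborel)"
        using L by (simp add: emeasure_lborel_Icc mult.commute)
      finally show ?thesis .
    qed
    have C: "(\<integral>\<^sup>+x. ennreal (dq x) \<partial>lborel)
        \<le> (\<integral>\<^sup>+x. ennreal (indicator \<Omega> x * norm (grad \<phi> x) powr q) \<partial>lborel)"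
    proof (intro nn_integral_mono ennreal_leI)
      fix x
      show "dq x \<le> indicator \<Omega> x * norm (grad \<phi> x) powr q"
      proof (cases "x \<in> \<Omega>")
        case True
        have "\<bar>d x\<bar> \<le> norm (grad \<phi> x)"
          using Basis_le_norm[OF e, of "grad \<phi> x"] grad_inner[OF e, of \<phi> x] by (simp add: d_def)
        then show ?thesis using True q unfolding dq_def by (auto intro: powr_mono2)
      next
        case False
        then show ?thesis using test_dzero[OF tf False] unfolding dq_def d_def by simp
      qed
    qed
    have "(\<integral>\<^sup>+x. ennreal (\<bar>\<phi> x\<bar> powr q) \<partial>lborel)
        \<le> (\<integral>\<^sup>+x. ennreal ((L+1) powr q) *
        (\<integral>\<^sup>+t. ennreal (dq (x + t *\<^sub>R e) * indicator {0..L} t) \<partial>lborel) \<partial>lborel)"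
      by (intro nn_integral_mono A)
    also have "\<dots> = ennreal ((L+1) powr q) * (\<integral>\<^sup>+x. (\<integral>\<^sup>+t. ennreal (dq (x + t *\<^sub>R e) * indicator {0..L} t) \<partial>lborel) \<partial>lborel)"
      by (rule nn_integral_cmult) (use meas2 in measurable)
    also have "\<dots> = ennreal ((L+1) powr q) * (ennreal L * (\<integral>\<^sup>+x. ennreal (dq x) \<partial>lborel))"
      unfolding B ..
    also have "\<dots> \<le> ennreal ((L+1) powr q) * (ennreal L * (\<integral>\<^sup>+x. ennreal (indicator \<Omega> x * norm (grad \<phi> x) powr q) \<partial>lborel))"
      by (intro mult_left_mono C) auto
    also have "\<dots> = ennreal KP * (\<integral>\<^sup>+x. ennreal (indicator \<Omega> x * norm (grad \<phi> x) powr q) \<partial>lborel)"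
      unfolding KP_def using L by (simp add: ennreal_mult mult.assoc)
    finally show "(\<integral>\<^sup>+x. ennreal (\<bar>\<phi> x\<bar> powr q) \<partial>lborel)
       \<le> ennreal KP * (\<integral>\<^sup>+x. ennreal (indicator \<Omega> x * norm (grad \<phi> x) powr q) \<partial>lborel)" .
  qed
qed

lemma nn_lebesgue_on:
  fixes \<Omega> :: "'a::euclidean_space set" and F :: "'a \<Rightarrow> real"
  assumes "\<Omega> \<in> sets lebesgue"
  shows "(\<integral>\<^sup>+x. ennreal (F x) \<partial>lebesgue_on \<Omega>) = (\<integral>\<^sup>+x. ennreal (indicator \<Omega> x * F x) \<partial>lborel)"
proof -
  have "(\<integral>\<^sup>+x. ennreal (F x) \<partial>lebesgue_on \<Omega>) = (\<integral>\<^sup>+x. ennreal (F x) * indicator \<Omega> x \<partial>lebesgue)"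
    using assms by (intro nn_integral_restrict_space) simp
  also have "\<dots> = (\<integral>\<^sup>+x. ennreal (F x) * indicator \<Omega> x \<partial>lborel)"
    by (rule nn_integral_completion)
  also have "\<dots> = (\<integral>\<^sup>+x. ennreal (indicator \<Omega> x * F x) \<partial>lborel)"
    by (intro nn_integral_cong) (auto simp: indicator_def)
  finally show ?thesis .
qed

lemma integrable_cont_on:
  fixes \<Omega> :: "'a::euclidean_space set" and F :: "'a \<Rightarrow> real"
  assumes bdd: "bounded \<Omega>" and opn: "open \<Omega>" and c: "continuous_on UNIV F"
  shows "integrable (lebesgue_on \<Omega>) F"
proof -
  have fm: "finite_measure (lebesgue_on \<Omega>)" by (rule finite_measure_lebesgue_on[OF lmeasurable_open[OF bdd opn]])
  have "compact (F ` closure \<Omega>)"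
    using bdd by (intro compact_continuous_image continuous_on_subset[OF c]) (auto simp: compact_closure)
  then obtain B where B: "\<forall>y\<in>F ` closure \<Omega>. norm y \<le> B"
    using compact_imp_bounded bounded_iff by metis
  have "AE x in lebesgue_on \<Omega>. norm (F x) \<le> B"
    using B closure_subset by (intro AE_I2) (auto simp: space_restrict_space)
  moreover have "F \<in> borel_measurable (lebesgue_on \<Omega>)"
    by (rule borel_lebesgue_on[OF borel_measurable_continuous_onI[OF c]])
  ultimately show ?thesis by (intro finite_measure.integrable_const_bound[OF fm])
qed

lemma poincare_test_real:
  fixes \<Omega> :: "'a::euclidean_space set"
  assumes bdd: "bounded \<Omega>" and opn: "open \<Omega>" and q: "q > 1"
  shows "\<exists>KP\<ge>0. \<forall>\<phi>. test_fun \<Omega> \<phi> \<longrightarrow>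
     integral\<^sup>L (lebesgue_on \<Omega>) (\<lambda>x. \<bar>\<phi> x\<bar> powr q)
       \<le> KP * integral\<^sup>L (lebesgue_on \<Omega>) (\<lambda>x. norm (grad \<phi> x) powr q)"
proof -
  obtain KP where KP: "KP \<ge> 0" and P: "\<And>\<phi>. test_fun \<Omega> \<phi> \<Longrightarrow>
     (\<integral>\<^sup>+x. ennreal (\<bar>\<phi> x\<bar> powr q) \<partial>lborel)
       \<le> ennreal KP * (\<integral>\<^sup>+x. ennreal (indicator \<Omega> x * norm (grad \<phi> x) powr q) \<partial>lborel)"
    using poincare_test_nn[OF bdd q] by blast
  have sl: "\<Omega> \<in> sets lebesgue" using lmeasurable_open[OF bdd opn] by (simp add: fmeasurableD)
  show ?thesis
  proof (intro exI[of _ KP] conjI KP allI impI)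
    fix \<phi> assume tf: "test_fun \<Omega> \<phi>"
    have c1: "continuous_on UNIV (\<lambda>x. \<bar>\<phi> x\<bar> powr q)" using q
      by (intro continuous_on_powr' continuous_intros test_cont[OF tf]) auto
    have c2: "continuous_on UNIV (\<lambda>x. norm (grad \<phi> x) powr q)" using q
      by (intro continuous_on_powr' continuous_intros test_grad_cont[OF tf]) auto
    have i1: "integrable (lebesgue_on \<Omega>) (\<lambda>x. \<bar>\<phi> x\<bar> powr q)" by (rule integrable_cont_on[OF bdd opn c1])
    have i2: "integrable (lebesgue_on \<Omega>) (\<lambda>x. norm (grad \<phi> x) powr q)" by (rule integrable_cont_on[OF bdd opn c2])
    have "ennreal (integral\<^sup>L (lebesgue_on \<Omega>) (\<lambda>x. \<bar>\<phi> x\<bar> powr q))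
        = (\<integral>\<^sup>+x. ennreal (\<bar>\<phi> x\<bar> powr q) \<partial>lebesgue_on \<Omega>)"
      by (rule nn_integral_eq_integral[symmetric]) (use i1 in auto)
    also have "\<dots> = (\<integral>\<^sup>+x. ennreal (indicator \<Omega> x * \<bar>\<phi> x\<bar> powr q) \<partial>lborel)"
      by (rule nn_lebesgue_on[OF sl])
    also have "\<dots> = (\<integral>\<^sup>+x. ennreal (\<bar>\<phi> x\<bar> powr q) \<partial>lborel)"
      by (intro nn_integral_cong) (auto simp: indicator_def test_zero[OF tf])
    also have "\<dots> \<le> ennreal KP * (\<integral>\<^sup>+x. ennreal (indicator \<Omega> x * norm (grad \<phi> x) powr q) \<partial>lborel)"
      by (rule P[OF tf])
    also have "(\<integral>\<^sup>+x. ennreal (indicator \<Omega> x * norm (grad \<phi> x) powr q) \<partial>lborel)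
        = (\<integral>\<^sup>+x. ennreal (norm (grad \<phi> x) powr q) \<partial>lebesgue_on \<Omega>)"
      by (rule nn_lebesgue_on[OF sl, symmetric])
    also have "\<dots> = ennreal (integral\<^sup>L (lebesgue_on \<Omega>) (\<lambda>x. norm (grad \<phi> x) powr q))"
      by (rule nn_integral_eq_integral) (use i2 in auto)
    also have "ennreal KP * \<dots> = ennreal (KP * integral\<^sup>L (lebesgue_on \<Omega>) (\<lambda>x. norm (grad \<phi> x) powr q))"
      using KP by (simp add: ennreal_mult)
    finally show "integral\<^sup>L (lebesgue_on \<Omega>) (\<lambda>x. \<bar>\<phi> x\<bar> powr q)
       \<le> KP * integral\<^sup>L (lebesgue_on \<Omega>) (\<lambda>x. norm (grad \<phi> x) powr q)"
      using KP by (subst (asm) ennreal_le_iff) (auto intro!: mult_nonneg_nonneg integral_nonneg_AE)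
  qed
qed

lemma Lq_int_tendsto:
  assumes q: "q > 0" and L: "(\<lambda>k. Lq_norm q \<Omega> (F k)) \<longlonglongrightarrow> 0"
  shows "(\<lambda>k. integral\<^sup>L (lebesgue_on \<Omega>) (\<lambda>x. norm (F k x) powr q)) \<longlonglongrightarrow> 0"
proof -
  let ?a = "\<lambda>k. integral\<^sup>L (lebesgue_on \<Omega>) (\<lambda>x. norm (F k x) powr q)"
  have a0: "?a k \<ge> 0" for k by (rule integral_nonneg_AE) auto
  have "(\<lambda>k. (Lq_norm q \<Omega> (F k)) powr q) \<longlonglongrightarrow> 0"
    using L q by (intro tendsto_zero_powrI) (auto simp: Lq_norm_def)
  moreover have "(Lq_norm q \<Omega> (F k)) powr q = ?a k" for k
    using a0[of k] q by (simp add: Lq_norm_def powr_powr)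
  ultimately show ?thesis by simp
qed

lemma poincare_W0:
  fixes \<Omega> :: "'a::euclidean_space set"
  assumes bdd: "bounded \<Omega>" and opn: "open \<Omega>" and q: "q > 1"
  shows "\<exists>K\<ge>0. \<forall>u g. (u, g) \<in> W0 q \<Omega> \<longrightarrow>
     integral\<^sup>L (lebesgue_on \<Omega>) (\<lambda>x. \<bar>u x\<bar> powr q)
       \<le> K * integral\<^sup>L (lebesgue_on \<Omega>) (\<lambda>x. norm (g x) powr q)"
proof -
  obtain KP where KP: "KP \<ge> 0" and P: "\<And>\<phi>. test_fun \<Omega> \<phi> \<Longrightarrow>
     integral\<^sup>L (lebesgue_on \<Omega>) (\<lambda>x. \<bar>\<phi> x\<bar> powr q)
       \<le> KP * integral\<^sup>L (lebesgue_on \<Omega>) (\<lambda>x. norm (grad \<phi> x) powr q)"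
    using poincare_test_real[OF bdd opn q] by blast
  define Q where "Q = (2::real) powr q"
  have Q: "Q > 0" by (simp add: Q_def)
  let ?M = "lebesgue_on \<Omega>"
  show ?thesis
  proof (intro exI[of _ "Q * KP * Q"] conjI allI impI)
    show "Q * KP * Q \<ge> 0" using Q KP by simp
    fix u g assume ug: "(u, g) \<in> W0 q \<Omega>"
    then obtain \<phi> where Lu: "Lq q \<Omega> u" and Lg: "Lq q \<Omega> g" and tf: "\<And>k. test_fun \<Omega> (\<phi> k)"
      and c1: "(\<lambda>k. Lq_norm q \<Omega> (\<lambda>x. u x - \<phi> k x)) \<longlonglongrightarrow> 0"
      and c2: "(\<lambda>k. Lq_norm q \<Omega> (\<lambda>x. g x - grad (\<phi> k) x)) \<longlonglongrightarrow> 0"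
      unfolding W0_def by blast
    have um[measurable]: "u \<in> borel_measurable ?M" and ui: "integrable ?M (\<lambda>x. \<bar>u x\<bar> powr q)"
      using Lu unfolding Lq_def by auto
    have gm[measurable]: "g \<in> borel_measurable ?M" and gi: "integrable ?M (\<lambda>x. norm (g x) powr q)"
      using Lg unfolding Lq_def by auto
    define a where "a k = integral\<^sup>L ?M (\<lambda>x. \<bar>u x - \<phi> k x\<bar> powr q)" for k
    define b where "b k = integral\<^sup>L ?M (\<lambda>x. norm (g x - grad (\<phi> k) x) powr q)" for k
    have a: "a \<longlonglongrightarrow> 0" unfolding a_def using Lq_int_tendsto[OF _ c1] q by simp
    have b: "b \<longlonglongrightarrow> 0" unfolding b_def using Lq_int_tendsto[OF _ c2] q by simp
    define U where "U = integral\<^sup>L ?M (\<lambda>x. \<bar>u x\<bar> powr q)"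
    define G where "G = integral\<^sup>L ?M (\<lambda>x. norm (g x) powr q)"
    have step: "U \<le> Q * a k + Q * KP * Q * b k + Q * KP * Q * G" for k
    proof -
      have tfk: "test_fun \<Omega> (\<phi> k)" by (rule tf)
      have pm[measurable]: "\<phi> k \<in> borel_measurable ?M"
        by (rule borel_lebesgue_on[OF borel_measurable_continuous_onI[OF test_cont[OF tfk]]])
      have gpm[measurable]: "grad (\<phi> k) \<in> borel_measurable ?M"
        by (rule borel_lebesgue_on[OF borel_measurable_continuous_onI[OF test_grad_cont[OF tfk]]])
      have c1: "continuous_on UNIV (\<lambda>x. \<bar>\<phi> k x\<bar> powr q)" using q
        by (intro continuous_on_powr' continuous_intros test_cont[OF tfk]) auto
      have c2: "continuous_on UNIV (\<lambda>x. norm (grad (\<phi> k) x) powr q)" using q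
        by (intro continuous_on_powr' continuous_intros test_grad_cont[OF tfk]) auto
      have pi: "integrable ?M (\<lambda>x. \<bar>\<phi> k x\<bar> powr q)" by (rule integrable_cont_on[OF bdd opn c1])
      have gpi: "integrable ?M (\<lambda>x. norm (grad (\<phi> k) x) powr q)" by (rule integrable_cont_on[OF bdd opn c2])
      have ai: "integrable ?M (\<lambda>x. \<bar>u x - \<phi> k x\<bar> powr q)"
      proof (rule Bochner_Integration.integrable_bound)
        show "integrable ?M (\<lambda>x. Q * (\<bar>u x\<bar> powr q + \<bar>\<phi> k x\<bar> powr q))" using ui pi by simp
        show "(\<lambda>x. \<bar>u x - \<phi> k x\<bar> powr q) \<in> borel_measurable ?M" by measurable
        show "AE x in ?M. norm (\<bar>u x - \<phi> k x\<bar> powr q) \<le> norm (Q * (\<bar>u x\<bar> powr q + \<bar>\<phi> k x\<bar> powr q))"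
          using pw_sum[of q "u x" "- \<phi> k x" for x] q Q
          by (intro AE_I2) (auto simp: Q_def)
      qed
      have bi: "integrable ?M (\<lambda>x. norm (g x - grad (\<phi> k) x) powr q)"
      proof (rule Bochner_Integration.integrable_bound)
        show "integrable ?M (\<lambda>x. Q * (norm (g x) powr q + norm (grad (\<phi> k) x) powr q))" using gi gpi by simp
        show "(\<lambda>x. norm (g x - grad (\<phi> k) x) powr q) \<in> borel_measurable ?M" by measurable
        show "AE x in ?M. norm (norm (g x - grad (\<phi> k) x) powr q) \<le> norm (Q * (norm (g x) powr q + norm (grad (\<phi> k) x) powr q))"
        proof (intro AE_I2)
          fix x
          have "norm (g x - grad (\<phi> k) x) powr q \<le> (norm (g x) + norm (grad (\<phi> k) x)) powr q"
            using q by (intro powr_mono2 norm_triangle_ineq4) auto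
          also have "\<dots> \<le> Q * (norm (g x) powr q + norm (grad (\<phi> k) x) powr q)"
            using pw_sum[of q "norm (g x)" "norm (grad (\<phi> k) x)"] q by (simp add: Q_def)
          finally show "norm (norm (g x - grad (\<phi> k) x) powr q) \<le> norm (Q * (norm (g x) powr q + norm (grad (\<phi> k) x) powr q))"
            by simp
        qed
      qed
      have s1: "U \<le> Q * (a k + integral\<^sup>L ?M (\<lambda>x. \<bar>\<phi> k x\<bar> powr q))"
      proof -
        have "U \<le> integral\<^sup>L ?M (\<lambda>x. Q * (\<bar>u x - \<phi> k x\<bar> powr q + \<bar>\<phi> k x\<bar> powr q))"
          unfolding U_def
        proof (rule integral_mono)
          show "integrable ?M (\<lambda>x. \<bar>u x\<bar> powr q)" by (rule ui)
          show "integrable ?M (\<lambda>x. Q * (\<bar>u x - \<phi> k x\<bar> powr q + \<bar>\<phi> k x\<bar> powr q))" using ai pi by simp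
          fix x show "\<bar>u x\<bar> powr q \<le> Q * (\<bar>u x - \<phi> k x\<bar> powr q + \<bar>\<phi> k x\<bar> powr q)"
            using pw_sum[of q "u x - \<phi> k x" "\<phi> k x"] q by (simp add: Q_def)
        qed
        also have "\<dots> = Q * (a k + integral\<^sup>L ?M (\<lambda>x. \<bar>\<phi> k x\<bar> powr q))"
          unfolding a_def using ai pi by (simp add: Bochner_Integration.integral_add)
        finally show ?thesis .
      qed
      have s2: "integral\<^sup>L ?M (\<lambda>x. norm (grad (\<phi> k) x) powr q) \<le> Q * (b k + G)"
      proof -
        have "integral\<^sup>L ?M (\<lambda>x. norm (grad (\<phi> k) x) powr q)
            \<le> integral\<^sup>L ?M (\<lambda>x. Q * (norm (g x - grad (\<phi> k) x) powr q + norm (g x) powr q))"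
        proof (rule integral_mono)
          show "integrable ?M (\<lambda>x. norm (grad (\<phi> k) x) powr q)" by (rule gpi)
          show "integrable ?M (\<lambda>x. Q * (norm (g x - grad (\<phi> k) x) powr q + norm (g x) powr q))" using bi gi by simp
          fix x
          have "norm (grad (\<phi> k) x) powr q \<le> (norm (g x - grad (\<phi> k) x) + norm (g x)) powr q"
            using q norm_triangle_ineq4[of "g x - grad (\<phi> k) x" "g x"] by (intro powr_mono2) auto
          also have "\<dots> \<le> Q * (norm (g x - grad (\<phi> k) x) powr q + norm (g x) powr q)"
            using pw_sum[of q "norm (g x - grad (\<phi> k) x)" "norm (g x)"] q by (simp add: Q_def)
          finally show "norm (grad (\<phi> k) x) powr q \<le> Q * (norm (g x - grad (\<phi> k) x) powr q + norm (g x) powr q)" .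
        qed
        also have "\<dots> = Q * (b k + G)"
          unfolding b_def G_def using bi gi by (simp add: Bochner_Integration.integral_add)
        finally show ?thesis .
      qed
      have "U \<le> Q * (a k + KP * (Q * (b k + G)))"
        using s1 P[OF tfk] s2 KP Q
        by (smt (verit, best) mult_left_mono)
      then show ?thesis by (simp add: algebra_simps)
    qed
    have lim: "(\<lambda>k. Q * a k + Q * KP * Q * b k + Q * KP * Q * G) \<longlonglongrightarrow> Q * 0 + Q * KP * Q * 0 + Q * KP * Q * G"
      by (intro tendsto_intros a b)
    have "U \<le> Q * 0 + Q * KP * Q * 0 + Q * KP * Q * G"
      by (rule LIMSEQ_le_const[OF lim]) (use step in auto)
    then show "integral\<^sup>L ?M (\<lambda>x. \<bar>u x\<bar> powr q) \<le> Q * KP * Q * integral\<^sup>L ?M (\<lambda>x. norm (g x) powr q)"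
      unfolding U_def G_def by simp
  qed
qed

lemma powr_mult_self:
  fixes x a :: real
  assumes "x \<ge> 0"
  shows "x powr a * x = x powr (a + 1)"
  using assms by (cases "x = 0") (simp_all add: powr_add)

lemma pw_Ti:
  fixes G H :: "'a::euclidean_space"
  assumes "2 \<le> pp" "pp \<le> q" "i \<in> Basis"
  shows "\<bar>\<bar>G \<bullet> i\<bar> powr (pp - 2) * (G \<bullet> i) * (H \<bullet> i)\<bar> \<le> 1 * ((1 + norm G powr (q-1)) * norm H)"
proof -
  have e: "\<bar>G \<bullet> i\<bar> powr (pp - 2) * \<bar>G \<bullet> i\<bar> = \<bar>G \<bullet> i\<bar> powr (pp - 1)"
    using powr_mult_self[of "\<bar>G \<bullet> i\<bar>" "pp - 2"] by simp
  have "\<bar>\<bar>G \<bullet> i\<bar> powr (pp - 2) * (G \<bullet> i) * (H \<bullet> i)\<bar> = \<bar>G \<bullet> i\<bar> powr (pp - 1) * \<bar>H \<bullet> i\<bar>"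
    using e by (simp add: abs_mult)
  also have "\<dots> \<le> (1 + norm G powr (q-1)) * norm H"
  proof (intro mult_mono)
    have "\<bar>G \<bullet> i\<bar> powr (pp - 1) \<le> 1 + \<bar>G \<bullet> i\<bar> powr (q - 1)"
      using assms by (intro pw_exp) auto
    also have "\<bar>G \<bullet> i\<bar> powr (q - 1) \<le> norm G powr (q-1)"
      using assms Basis_le_norm[OF assms(3), of G] by (intro powr_mono2) auto
    finally show "\<bar>G \<bullet> i\<bar> powr (pp - 1) \<le> 1 + norm G powr (q-1)" by simp
    show "\<bar>H \<bullet> i\<bar> \<le> norm H" by (rule Basis_le_norm[OF assms(3)])
  qed auto
  finally show ?thesis by simp
qed

lemma pw_E:
  fixes G H :: "'a::euclidean_space"
  assumes "q \<ge> 2"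
  shows "\<bar>norm G powr (q - 2) * (G \<bullet> H)\<bar> \<le> 1 * ((1 + norm G powr (q-1)) * norm H)"
proof -
  have "\<bar>norm G powr (q - 2) * (G \<bullet> H)\<bar> \<le> norm G powr (q - 2) * (norm G * norm H)"
    by (simp add: abs_mult mult_left_mono Cauchy_Schwarz_ineq2)
  also have "\<dots> = norm G powr (q - 1) * norm H"
    using powr_mult_self[of "norm G" "q - 2"] by (simp add: mult.assoc[symmetric])
  also have "\<dots> \<le> (1 + norm G powr (q-1)) * norm H" by (simp add: mult_right_mono)
  finally show ?thesis by simp
qed

lemma aux_lin: "(A::real) \<le> 1 + X \<Longrightarrow> 0 \<le> X \<Longrightarrow> 1 + A \<le> 2 * (1 + X)"
  by (simp add: algebra_simps)

lemma pw_F: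
  fixes t y fv c r q :: real
  assumes "1 \<le> r" "r \<le> q" "c > 0" "\<bar>fv\<bar> \<le> c * (1 + \<bar>t\<bar> powr (r - 1))"
  shows "\<bar>fv * y\<bar> \<le> (2 * c) * ((1 + \<bar>t\<bar> powr (q - 1)) * \<bar>y\<bar>)"
proof -
  have "\<bar>t\<bar> powr (r - 1) \<le> 1 + \<bar>t\<bar> powr (q - 1)" using assms by (intro pw_exp) auto
  hence "1 + \<bar>t\<bar> powr (r - 1) \<le> 2 * (1 + \<bar>t\<bar> powr (q - 1))"
    using powr_ge_zero[of "\<bar>t\<bar>" "q - 1"] aux_lin by blast
  hence "c * (1 + \<bar>t\<bar> powr (r - 1)) \<le> c * (2 * (1 + \<bar>t\<bar> powr (q - 1)))"
    using assms by (intro mult_left_mono) auto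
  hence "\<bar>fv\<bar> \<le> 2 * c * (1 + \<bar>t\<bar> powr (q - 1))" using assms by linarith
  hence "\<bar>fv\<bar> * \<bar>y\<bar> \<le> 2 * c * (1 + \<bar>t\<bar> powr (q - 1)) * \<bar>y\<bar>" by (rule mult_right_mono) simp
  then show ?thesis by (simp add: abs_mult mult.assoc)
qed

lemma powr_le_from_root:
  fixes X B q :: real
  assumes "X \<ge> 0" "q > 0" "X powr (1/q) \<le> B"
  shows "X \<le> B powr q"
proof -
  have "X = (X powr (1/q)) powr q" using assms by (simp add: powr_powr)
  also have "\<dots> \<le> B powr q" using assms by (intro powr_mono2) auto
  finally show ?thesis .
qed

lemma abs3:
  fixes a b d e :: real
  assumes "e \<ge> 0"
  shows "\<bar>a + e * b - d\<bar> \<le> \<bar>a\<bar> + e * \<bar>b\<bar> + \<bar>d\<bar>"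
proof -
  have "\<bar>e * b\<bar> = e * \<bar>b\<bar>" using assms by (simp add: abs_mult)
  then show ?thesis by linarith
qed

lemma bounded_part:
  fixes \<Omega> :: "'a::euclidean_space set" and p :: "'a \<Rightarrow> real \<Rightarrow> real"
  assumes fm: "finite_measure (lebesgue_on \<Omega>)" and q: "q \<ge> 2"
    and pq: "\<forall>i\<in>Basis. \<forall>t. 2 \<le> p i t \<and> p i t \<le> q"
    and r: "1 \<le> r" "r \<le> q" and c: "c > 0" and eps: "\<epsilon> > 0"
    and f_growth: "AE x in lebesgue_on \<Omega>. \<forall>t. \<bar>f x t\<bar> \<le> c * (1 + \<bar>t\<bar> powr (r - 1))"
  shows "\<forall>B. \<exists>K. \<forall>ug\<in>W0 q \<Omega>. W_norm q \<Omega> ug \<le> B \<longrightarrow>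
              (\<forall>vh\<in>W0 q \<Omega>. \<bar>opI \<Omega> p q \<epsilon> f ug vh\<bar> \<le> K * W_norm q \<Omega> vh)"
proof
  fix B :: real
  let ?M = "lebesgue_on \<Omega>"
  define \<mu> where "\<mu> = measure ?M (space ?M)"
  have \<mu>: "\<mu> \<ge> 0" by (simp add: \<mu>_def)
  define Bq where "Bq = (max B 0) powr q"
  have Bq: "Bq \<ge> 0" by (simp add: Bq_def)
  define X where "X = \<mu> + Bq + 2"
  have X: "X > 0" using \<mu> Bq by (simp add: X_def)
  define K where "K = (real DIM('a) + \<epsilon> + 2 * c) * X"
  have K: "K > 0" using X eps c by (simp add: K_def add_pos_nonneg)
  have q1: "q > 1" using q by simp
  show "\<exists>K. \<forall>ug\<in>W0 q \<Omega>. W_norm q \<Omega> ug \<le> B \<longrightarrow>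
              (\<forall>vh\<in>W0 q \<Omega>. \<bar>opI \<Omega> p q \<epsilon> f ug vh\<bar> \<le> K * W_norm q \<Omega> vh)"
  proof (intro exI[of _ K] ballI impI)
    fix ug vh assume ugW: "ug \<in> W0 q \<Omega>" and WB: "W_norm q \<Omega> ug \<le> B" and vhW: "vh \<in> W0 q \<Omega>"
    obtain u g where ug: "ug = (u, g)" by (cases ug)
    obtain v h where vh: "vh = (v, h)" by (cases vh)
    have Lu: "Lq q \<Omega> u" and Lg: "Lq q \<Omega> g" using ugW ug unfolding W0_def by auto
    have Lv: "Lq q \<Omega> v" and Lh: "Lq q \<Omega> h" using vhW vh unfolding W0_def by auto
    have ui: "integrable ?M (\<lambda>x. \<bar>u x\<bar> powr q)" using Lu unfolding Lq_def by auto
    have gi: "integrable ?M (\<lambda>x. norm (g x) powr q)" using Lg unfolding Lq_def by auto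
    have vi: "integrable ?M (\<lambda>x. \<bar>v x\<bar> powr q)" using Lv unfolding Lq_def by auto
    have hi: "integrable ?M (\<lambda>x. norm (h x) powr q)" using Lh unfolding Lq_def by auto
    define U where "U = integral\<^sup>L ?M (\<lambda>x. \<bar>u x\<bar> powr q)"
    define G where "G = integral\<^sup>L ?M (\<lambda>x. norm (g x) powr q)"
    define V where "V = integral\<^sup>L ?M (\<lambda>x. \<bar>v x\<bar> powr q)"
    define H where "H = integral\<^sup>L ?M (\<lambda>x. norm (h x) powr q)"
    have U0: "U \<ge> 0" "G \<ge> 0" "V \<ge> 0" "H \<ge> 0" unfolding U_def G_def V_def H_def
      by (auto intro!: integral_nonneg_AE)
    have Wug: "W_norm q \<Omega> ug = U powr (1/q) + G powr (1/q)"
      unfolding ug W_norm_def Lq_norm_def U_def G_def by simp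
    define S where "S = W_norm q \<Omega> vh"
    have Svh: "S = V powr (1/q) + H powr (1/q)"
      unfolding S_def vh W_norm_def Lq_norm_def V_def H_def by simp
    have "U powr (1/q) \<le> B" using Wug WB powr_ge_zero[of G "1/q"] by linarith
    hence "U powr (1/q) \<le> max B 0" by simp
    hence UB: "U \<le> Bq" unfolding Bq_def using U0 q by (intro powr_le_from_root) auto
    have "G powr (1/q) \<le> B" using Wug WB powr_ge_zero[of U "1/q"] by linarith
    hence "G powr (1/q) \<le> max B 0" by simp
    hence GB: "G \<le> Bq" unfolding Bq_def using U0 q by (intro powr_le_from_root) auto
    have S0: "S \<ge> 0" using Svh by simp
    have main: "\<bar>opI \<Omega> p q \<epsilon> f ug vh\<bar> \<le> K * (S + \<delta>)" if \<delta>: "\<delta> > 0" for \<delta>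
    proof -
      define s where "s = S + \<delta>"
      have s: "s > 0" using S0 \<delta> by (simp add: s_def)
      have "V powr (1/q) \<le> s" using Svh \<delta> powr_ge_zero[of H "1/q"] unfolding s_def by linarith
      hence Vs: "V \<le> s powr q" using U0 q by (intro powr_le_from_root) auto
      have "H powr (1/q) \<le> s" using Svh \<delta> powr_ge_zero[of V "1/q"] unfolding s_def by linarith
      hence Hs: "H \<le> s powr q" using U0 q by (intro powr_le_from_root) auto
      have Ti: "\<bar>integral\<^sup>L ?M (\<lambda>x. \<bar>g x \<bullet> i\<bar> powr (p i (u x) - 2) * (g x \<bullet> i) * (h x \<bullet> i))\<bar> \<le> 1 * s * X"
        if i: "i \<in> Basis" for i
        unfolding X_def \<mu>_def
        by (rule bound_term[OF fm q1, of "\<lambda>x. norm (g x)" "\<lambda>x. norm (h x)"])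
           (use gi hi GB Hs s pq i in \<open>auto simp: G_def H_def intro!: AE_I2 pw_Ti[simplified]\<close>)
      have E: "\<bar>integral\<^sup>L ?M (\<lambda>x. norm (g x) powr (q - 2) * (g x \<bullet> h x))\<bar> \<le> 1 * s * X"
        unfolding X_def \<mu>_def
        by (rule bound_term[OF fm q1, of "\<lambda>x. norm (g x)" "\<lambda>x. norm (h x)"])
           (use gi hi GB Hs s q in \<open>auto simp: G_def H_def intro!: AE_I2 pw_E[simplified]\<close>)
      have AEF: "AE x in ?M. \<bar>f x (u x) * v x\<bar> \<le> (2 * c) * ((1 + \<bar>u x\<bar> powr (q - 1)) * \<bar>v x\<bar>)"
        using f_growth
      proof eventually_elim
        case (elim x) show ?case by (rule pw_F[OF r(1) r(2) c]) (use elim in auto)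
      qed
      have F: "\<bar>integral\<^sup>L ?M (\<lambda>x. f x (u x) * v x)\<bar> \<le> (2 * c) * s * X"
        unfolding X_def \<mu>_def
        by (rule bound_term[OF fm q1, of "\<lambda>x. \<bar>u x\<bar>" "\<lambda>x. \<bar>v x\<bar>"])
           (use ui vi UB Vs s c AEF in \<open>auto simp: U_def V_def\<close>)
      have sumb: "\<bar>\<Sum>i\<in>Basis. integral\<^sup>L ?M (\<lambda>x. \<bar>g x \<bullet> i\<bar> powr (p i (u x) - 2) * (g x \<bullet> i) * (h x \<bullet> i))\<bar>
          \<le> real DIM('a) * (s * X)"
      proof -
        have "\<bar>\<Sum>i\<in>Basis. integral\<^sup>L ?M (\<lambda>x. \<bar>g x \<bullet> i\<bar> powr (p i (u x) - 2) * (g x \<bullet> i) * (h x \<bullet> i))\<bar>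
           \<le> (\<Sum>i\<in>(Basis::'a set). \<bar>integral\<^sup>L ?M (\<lambda>x. \<bar>g x \<bullet> i\<bar> powr (p i (u x) - 2) * (g x \<bullet> i) * (h x \<bullet> i))\<bar>)"
          by (rule sum_abs)
        also have "\<dots> \<le> (\<Sum>i\<in>(Basis::'a set). s * X)"
          using Ti by (intro sum_mono) simp
        also have "\<dots> = real DIM('a) * (s * X)" by simp
        finally show ?thesis .
      qed
      have "\<bar>opI \<Omega> p q \<epsilon> f ug vh\<bar> \<le> real DIM('a) * (s * X) + \<epsilon> * (s * X) + (2 * c) * s * X"
      proof -
        have "\<epsilon> * \<bar>integral\<^sup>L ?M (\<lambda>x. norm (g x) powr (q - 2) * (g x \<bullet> h x))\<bar> \<le> \<epsilon> * (s * X)"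
          using E eps by (intro mult_left_mono) auto
        then show ?thesis
          unfolding opI_def Let_def ug vh fst_conv snd_conv
          using sumb F abs3[OF less_imp_le[OF eps]] by (smt (verit))
      qed
      also have "\<dots> = K * s" unfolding K_def by (simp add: algebra_simps)
      finally show ?thesis unfolding s_def .
    qed
    have "\<bar>opI \<Omega> p q \<epsilon> f ug vh\<bar> \<le> K * S"
    proof (rule field_le_epsilon)
      fix e :: real assume e: "e > 0"
      have "\<bar>opI \<Omega> p q \<epsilon> f ug vh\<bar> \<le> K * (S + e / K)" using main[of "e/K"] e K by simp
      also have "\<dots> = K * S + e" using K by (simp add: algebra_simps)
      finally show "\<bar>opI \<Omega> p q \<epsilon> f ug vh\<bar> \<le> K * S + e" .
    qed
    then show "\<bar>opI \<Omega> p q \<epsilon> f ug vh\<bar> \<le> K * W_norm q \<Omega> vh" unfolding S_def .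
  qed
qed

lemma coercive_part:
  fixes \<Omega> :: "'a::euclidean_space set" and p :: "'a \<Rightarrow> real \<Rightarrow> real"
  assumes fm: "finite_measure (lebesgue_on \<Omega>)" and q: "q \<ge> 2"
    and r: "1 \<le> r" "r < q" and c: "c > 0" and eps: "\<epsilon> > 0" and KP: "KP \<ge> 0"
    and poinc: "\<forall>u g. (u, g) \<in> W0 q \<Omega> \<longrightarrow> integral\<^sup>L (lebesgue_on \<Omega>) (\<lambda>x. \<bar>u x\<bar> powr q)
        \<le> KP * integral\<^sup>L (lebesgue_on \<Omega>) (\<lambda>x. norm (g x) powr q)"
    and f_growth: "AE x in lebesgue_on \<Omega>. \<forall>t. \<bar>f x t\<bar> \<le> c * (1 + \<bar>t\<bar> powr (r - 1))"
  shows "\<forall>M. \<exists>R. \<forall>ug\<in>W0 q \<Omega>. W_norm q \<Omega> ug \<ge> R \<longrightarrow>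
              opI \<Omega> p q \<epsilon> f ug ug / W_norm q \<Omega> ug \<ge> M"
proof
  fix M :: real
  let ?M = "lebesgue_on \<Omega>"
  define k where "k = KP + 1"
  have k: "k > 0" using KP by (simp add: k_def)
  define \<delta> where "\<delta> = \<epsilon> / (4 * c * k)"
  have \<delta>: "\<delta> > 0" using eps c k by (simp add: \<delta>_def)
  obtain C1 where C1: "C1 \<ge> 0" "\<forall>t\<ge>0. t powr 1 \<le> \<delta> * t powr q + C1"
    using pw_sub[of 1 q \<delta>] r \<delta> by auto
  obtain C2 where C2: "C2 \<ge> 0" "\<forall>t\<ge>0. t powr r \<le> \<delta> * t powr q + C2"
    using pw_sub[of r q \<delta>] r \<delta> by auto
  define \<mu> where "\<mu> = measure ?M (space ?M)"
  have \<mu>: "\<mu> \<ge> 0" by (simp add: \<mu>_def)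
  define A where "A = c * ((C1 + C2) * \<mu>)"
  have A: "A \<ge> 0" using c C1 C2 \<mu> by (simp add: A_def)
  define K1 where "K1 = KP powr (1/q) + 1"
  have K1: "K1 \<ge> 1" by (simp add: K1_def)
  define Z where "Z = (\<bar>M\<bar> * K1 + A) * 2 / \<epsilon> + 1"
  define R where "R = K1 * max 1 Z"
  have q1: "q > 1" using q by simp
  show "\<exists>R. \<forall>ug\<in>W0 q \<Omega>. W_norm q \<Omega> ug \<ge> R \<longrightarrow> opI \<Omega> p q \<epsilon> f ug ug / W_norm q \<Omega> ug \<ge> M"
  proof (intro exI[of _ R] ballI impI)
    fix ug assume ugW: "ug \<in> W0 q \<Omega>" and WR: "W_norm q \<Omega> ug \<ge> R"
    obtain u g where ug: "ug = (u, g)" by (cases ug)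
    have Lu: "Lq q \<Omega> u" and Lg: "Lq q \<Omega> g" using ugW ug unfolding W0_def by auto
    have ui: "integrable ?M (\<lambda>x. \<bar>u x\<bar> powr q)" using Lu unfolding Lq_def by auto
    have gi: "integrable ?M (\<lambda>x. norm (g x) powr q)" using Lg unfolding Lq_def by auto
    define U where "U = integral\<^sup>L ?M (\<lambda>x. \<bar>u x\<bar> powr q)"
    define G where "G = integral\<^sup>L ?M (\<lambda>x. norm (g x) powr q)"
    have U0: "U \<ge> 0" "G \<ge> 0" unfolding U_def G_def by (auto intro!: integral_nonneg_AE)
    have UKG: "U \<le> KP * G" using poinc ugW ug unfolding U_def G_def by auto
    define W where "W = W_norm q \<Omega> ug"
    have Wug: "W = U powr (1/q) + G powr (1/q)"
      unfolding W_def ug W_norm_def Lq_norm_def U_def G_def by simp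
    have S1: "0 \<le> (\<Sum>i\<in>Basis. integral\<^sup>L ?M (\<lambda>x. \<bar>g x \<bullet> i\<bar> powr (p i (u x) - 2) * (g x \<bullet> i) * (g x \<bullet> i)))"
      by (intro sum_nonneg integral_nonneg_AE AE_I2) (simp add: mult.assoc)
    have E: "integral\<^sup>L ?M (\<lambda>x. norm (g x) powr (q - 2) * (g x \<bullet> g x)) = G"
      unfolding G_def
    proof (intro Bochner_Integration.integral_cong refl)
      fix x
      have "g x \<bullet> g x = norm (g x) * norm (g x)" by (simp add: power2_norm_eq_inner[symmetric] power2_eq_square)
      then show "norm (g x) powr (q - 2) * (g x \<bullet> g x) = norm (g x) powr q"
        using powr_mult_self[of "norm (g x)" "q - 2"] powr_mult_self[of "norm (g x)" "q - 2 + 1"]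
        by (simp add: mult.assoc[symmetric])
    qed
    have AEF: "AE x in ?M. \<bar>f x (u x) * u x\<bar> \<le> c * ((1 + \<bar>u x\<bar> powr (r - 1)) * \<bar>u x\<bar>)"
      using f_growth
    proof eventually_elim
      case (elim x)
      hence "\<bar>f x (u x)\<bar> * \<bar>u x\<bar> \<le> c * (1 + \<bar>u x\<bar> powr (r - 1)) * \<bar>u x\<bar>"
        by (intro mult_right_mono) auto
      then show ?case by (simp add: abs_mult mult.assoc)
    qed
    have Fi: "\<bar>integral\<^sup>L ?M (\<lambda>x. f x (u x) * u x)\<bar> \<le> c * (2 * \<delta> * U + (C1 + C2) * \<mu>)"
      unfolding U_def \<mu>_def
      by (rule lower_term[OF fm r(1), of "\<lambda>x. \<bar>u x\<bar>"]) (use ui c \<delta> C1 C2 AEF in auto)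
    have op: "opI \<Omega> p q \<epsilon> f ug ug = (\<Sum>i\<in>Basis. integral\<^sup>L ?M (\<lambda>x. \<bar>g x \<bullet> i\<bar> powr (p i (u x) - 2) * (g x \<bullet> i) * (g x \<bullet> i)))
        + \<epsilon> * G - integral\<^sup>L ?M (\<lambda>x. f x (u x) * u x)"
      unfolding opI_def Let_def ug fst_conv snd_conv E ..
    have "2 * c * \<delta> * U \<le> 2 * c * \<delta> * (KP * G)"
      using UKG c \<delta> by (intro mult_left_mono) auto
    also have "\<dots> = (\<epsilon> / 2) * (KP / k) * G"
      unfolding \<delta>_def using c k by (simp add: field_simps)
    also have "\<dots> \<le> (\<epsilon> / 2) * 1 * G"
      using eps KP U0 k by (intro mult_right_mono mult_left_mono) (auto simp: k_def)
    finally have dU: "2 * c * \<delta> * U \<le> (\<epsilon> / 2) * G" by simp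
    have L1: "opI \<Omega> p q \<epsilon> f ug ug \<ge> (\<epsilon> / 2) * G - A"
    proof -
      have "c * (2 * \<delta> * U + (C1 + C2) * \<mu>) = 2 * c * \<delta> * U + A" unfolding A_def by (simp add: algebra_simps)
      then show ?thesis unfolding op using S1 Fi dU by linarith
    qed
    have "U powr (1/q) \<le> (KP * G) powr (1/q)" using UKG U0 q by (intro powr_mono2) auto
    also have "\<dots> = KP powr (1/q) * G powr (1/q)" using KP U0 by (simp add: powr_mult)
    finally have "W \<le> K1 * G powr (1/q)" unfolding Wug K1_def by (simp add: algebra_simps)
    define z where "z = W / K1"
    have WK: "W = K1 * z" using K1 unfolding z_def by simp
    have "R \<ge> K1 * 1" unfolding R_def using K1 by (intro mult_left_mono) auto
    hence Wpos: "W > 0" using WR K1 unfolding W_def by simp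
    have "max 1 Z * K1 \<le> W" using WR unfolding R_def W_def by (simp add: mult.commute)
    hence zZ: "z \<ge> max 1 Z" using K1 unfolding z_def by (subst pos_le_divide_eq) auto
    have z1: "z \<ge> 1" and zZ': "z \<ge> Z" using zZ by auto
    have zG: "z \<le> G powr (1/q)" using \<open>W \<le> K1 * G powr (1/q)\<close> K1 unfolding z_def
      by (subst pos_divide_le_eq) (auto simp: mult.commute)
    have "z powr 2 \<le> z powr q" using z1 q by (intro powr_mono) auto
    also have "\<dots> \<le> (G powr (1/q)) powr q" using zG z1 q by (intro powr_mono2) auto
    also have "\<dots> = G" using U0 q by (simp add: powr_powr)
    finally have z2G: "z * z \<le> G" using z1 by (simp add: powr_numeral power2_eq_square)
    have "(\<epsilon> / 2) * Z \<ge> \<bar>M\<bar> * K1 + A" unfolding Z_def using eps by (simp add: field_simps)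
    hence "(\<epsilon> / 2) * Z * z \<ge> (\<bar>M\<bar> * K1 + A) * z" using z1 by (intro mult_right_mono) auto
    moreover have "(\<epsilon> / 2) * (z * z) \<ge> (\<epsilon> / 2) * Z * z"
      using zZ' z1 eps by (simp add: mult.assoc mult_left_mono mult_right_mono)
    moreover have "(\<bar>M\<bar> * K1 + A) * z \<ge> \<bar>M\<bar> * K1 * z + A"
    proof -
      have "A * 1 \<le> A * z" using A z1 by (intro mult_left_mono)
      then show ?thesis by (simp add: distrib_right)
    qed
    moreover have "(\<epsilon> / 2) * G \<ge> (\<epsilon> / 2) * (z * z)" using z2G eps by simp
    moreover have "\<bar>M\<bar> * K1 * z \<ge> M * W" unfolding WK using K1 z1
      by (simp add: mult.assoc mult_right_mono)
    ultimately have "opI \<Omega> p q \<epsilon> f ug ug \<ge> M * W" using L1 by linarith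
    then show "opI \<Omega> p q \<epsilon> f ug ug / W_norm q \<Omega> ug \<ge> M"
      using Wpos unfolding W_def by (simp add: pos_le_divide_eq)
  qed
qed

theorem lemma3p5:
  fixes \<Omega> :: "'a::euclidean_space set"
    and p :: "'a \<Rightarrow> real \<Rightarrow> real"
    and f :: "'a \<Rightarrow> real \<Rightarrow> real"
    and c r \<epsilon> :: real
  defines "Pm \<equiv> Min ((\<lambda>i. pminus (p i)) ` Basis)"
      and "Pp \<equiv> Max ((\<lambda>i. pplus (p i)) ` Basis)"
  assumes dim: "DIM('a) \<ge> 2"
    and dom: "lipschitz_domain \<Omega>"
    and p_cont: "\<forall>i\<in>Basis. continuous_on UNIV (p i)"
    and p_ge2: "\<forall>i\<in>Basis. \<forall>t. p i t \<ge> 2"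
    and p_bdd: "\<forall>i\<in>Basis. bdd_above (range (p i))"
    and p_gtN: "\<forall>i\<in>Basis. real DIM('a) < pminus (p i)"
    and f_car: "caratheodory \<Omega> f"
    and f_neg: "AE x in lebesgue_on \<Omega>. f x 0 < 0"
    and c_pos: "c > 0"
    and r: "1 \<le> r" "r < Pm"
    and f_growth: "AE x in lebesgue_on \<Omega>. \<forall>t. \<bar>f x t\<bar> \<le> c * (1 + \<bar>t\<bar> powr (r - 1))"
    and eps: "\<epsilon> > 0"
  shows "(\<forall>M. \<exists>R. \<forall>ug\<in>W0 Pp \<Omega>. W_norm Pp \<Omega> ug \<ge> R \<longrightarrow>
              opI \<Omega> p Pp \<epsilon> f ug ug / W_norm Pp \<Omega> ug \<ge> M)
       \<and> (\<forall>B. \<exists>K. \<forall>ug\<in>W0 Pp \<Omega>. W_norm Pp \<Omega> ug \<le> B \<longrightarrow>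
              (\<forall>vh\<in>W0 Pp \<Omega>. \<bar>opI \<Omega> p Pp \<epsilon> f ug vh\<bar> \<le> K * W_norm Pp \<Omega> vh))"
proof -
  have opn: "open \<Omega>" and bdd: "bounded \<Omega>" using dom unfolding lipschitz_domain_def by auto
  have fm: "finite_measure (lebesgue_on \<Omega>)"
    by (rule finite_measure_lebesgue_on[OF lmeasurable_open[OF bdd opn]])
  have finB: "finite ((\<lambda>i. pplus (p i)) ` (Basis::'a set))" by simp
  have finB2: "finite ((\<lambda>i. pminus (p i)) ` (Basis::'a set))" by simp
  have pleP: "p i t \<le> Pp" if i: "i \<in> Basis" for i t
  proof -
    have "p i t \<le> pplus (p i)" unfolding pplus_def
      using p_bdd i by (intro cSup_upper) auto
    also have "pplus (p i) \<le> Pp" unfolding Pp_def using finB i by (intro Max_ge) auto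
    finally show ?thesis .
  qed
  obtain i0 :: 'a where i0: "i0 \<in> Basis" using nonempty_Basis by blast
  have "Pm \<le> pminus (p i0)" unfolding Pm_def using finB2 i0 by (intro Min_le) auto
  also have "pminus (p i0) \<le> p i0 0" unfolding pminus_def
    using p_ge2 i0 by (intro cInf_lower) (auto intro!: bdd_belowI[of _ 2])
  finally have Pm_le: "Pm \<le> p i0 0" .
  have "2 \<le> p i0 0" using p_ge2 i0 by blast
  hence Pp2: "Pp \<ge> 2" using pleP[OF i0, of 0] by linarith
  have rP: "r < Pp" using r Pm_le pleP[OF i0, of 0] by linarith
  have q1: "Pp > 1" using Pp2 by simp
  obtain KP where KP: "KP \<ge> 0" and poinc: "\<forall>u g. (u, g) \<in> W0 Pp \<Omega> \<longrightarrow>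
     integral\<^sup>L (lebesgue_on \<Omega>) (\<lambda>x. \<bar>u x\<bar> powr Pp)
       \<le> KP * integral\<^sup>L (lebesgue_on \<Omega>) (\<lambda>x. norm (g x) powr Pp)"
    using poincare_W0[OF bdd opn q1] by blast
  have pq: "\<forall>i\<in>Basis. \<forall>t. 2 \<le> p i t \<and> p i t \<le> Pp" using p_ge2 pleP by auto
  show ?thesis
  proof (rule conjI)
    show "\<forall>M. \<exists>R. \<forall>ug\<in>W0 Pp \<Omega>. W_norm Pp \<Omega> ug \<ge> R \<longrightarrow>
              opI \<Omega> p Pp \<epsilon> f ug ug / W_norm Pp \<Omega> ug \<ge> M"
      by (rule coercive_part[OF fm Pp2 r(1) rP c_pos eps KP poinc f_growth])
    show "\<forall>B. \<exists>K. \<forall>ug\<in>W0 Pp \<Omega>. W_norm Pp \<Omega> ug \<le> B \<longrightarrow>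
              (\<forall>vh\<in>W0 Pp \<Omega>. \<bar>opI \<Omega> p Pp \<epsilon> f ug vh\<bar> \<le> K * W_norm Pp \<Omega> vh)"
      by (rule bounded_part[OF fm Pp2 pq r(1) less_imp_le[OF rP] c_pos eps f_growth])
  qed
qed

end
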